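(* Let $X$ be a three-dimensional real Banach space and $V\subset X$ a two-dimensional subspace. Suppose $$\lambda_w^{\mathrm{id}_V}:=\inf\{\|P\|_w: P\in\mathcal{P}(X,V)\}>1.$$ Then there exists exactly one $P_0\in\mathcal{P}(X,V)$ with $\|P_0\|_w=\lambda_w^{\mathrm{id}_V}$, and there is $r>0$ such that $\|P\|_w\ge\|P_0\|_w+r\|P-P_0\|_w$ for all $P\in\mathcal{P}(X,V)$ (i.e. $0$ is a strongly unique best approximation to $P_0$ in $B_V(X,V)=\{L\in B(X,V):L|_V=0\}$ with respect to the numerical radius). In particular $P_0$ is the unique minimal projection with respect to the numerical radius.
   Context: $\mathcal{P}(X,V)$ is the set of linear projections from $X$ onto $V$, i.e. linear $P:X\to V$ with $Pv=v$ for all $v\in V$ (automatically bounded in finite dimensions). For $T\in B(X)$ the numerical radius is $\|T\|_w=\sup\{|x^*(Tx)|:x\in S_X,x^*\in S_{X^*},x^*(x)=1\}$. *)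

theory Defs
  imports "HOL-Analysis.Analysis"
begin

definition numrad :: "('a::real_normed_vector \<Rightarrow> 'a) \<Rightarrow> real" where
  "numrad T = Sup {\<bar>f (T x)\<bar> | x f. norm x = 1 \<and> bounded_linear f \<and> onorm f = 1 \<and> f x = 1}"

definition projections :: "'a::real_normed_vector set \<Rightarrow> ('a \<Rightarrow> 'a) set" where
  "projections V = {P. linear P \<and> range P \<subseteq> V \<and> (\<forall>v\<in>V. P v = v)}"

definition lambda_w :: "'a::real_normed_vector set \<Rightarrow> real" where
  "lambda_w V = Inf (numrad ` projections V)"

end

theory Submission
  imports Defs
begin


lemma compact_sub_ge:
  fixes f :: "'x::metric_space \<Rightarrow> real"
  assumes "compact S" "continuous_on S f"
  shows "compact {q\<in>S. 0 \<le> f q}"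
proof -
  have "closed (S \<inter> f -` {0..})"
    by (rule continuous_closed_preimage[OF assms(2) compact_imp_closed[OF assms(1)]]) simp
  from compact_Int_closed[OF assms(1) this] show ?thesis
    by (simp add: Int_def Collect_conj_eq[symmetric])
qed

lemma GL1:
  fixes P Q :: "'x::metric_space \<Rightarrow> real"
  assumes S: "compact S" and cP: "continuous_on S P" and cQ: "continuous_on S Q"
    and Qle: "\<forall>q\<in>S. Q q \<le> 0" and Q0: "\<forall>q\<in>S. Q q = 0 \<longrightarrow> P q < 0"
  shows "\<exists>K. \<forall>q\<in>S. P q + K * Q q < 0"
proof -
  define C where "C = {q\<in>S. 0 \<le> P q}"
  have cC: "compact C" unfolding C_def by (rule compact_sub_ge[OF S cP])
  show ?thesis
  proof (cases "C = {}")
    case True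
    then have "\<forall>q\<in>S. P q + 0 * Q q < 0" by (auto simp: C_def not_le)
    then show ?thesis by blast
  next
    case False
    have "continuous_on C Q" using cQ by (rule continuous_on_subset) (auto simp: C_def)
    from continuous_attains_sup[OF cC False this]
    obtain q1 where q1: "q1 \<in> C" "\<forall>q\<in>C. Q q \<le> Q q1" by blast
    have "q1 \<in> S" "0 \<le> P q1" using q1 by (auto simp: C_def)
    then have "Q q1 < 0" using Qle Q0 by (metis less_eq_real_def not_le)
    have "S \<noteq> {}" using \<open>q1 \<in> S\<close> by blast
    from continuous_attains_sup[OF S this cP]
    obtain q2 where q2: "q2 \<in> S" "\<forall>q\<in>S. P q \<le> P q2" by blast
    have "0 \<le> P q2" using q2 \<open>q1 \<in> S\<close> \<open>0 \<le> P q1\<close> by force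
    define K where "K = (P q2 + 1) / (- Q q1)"
    have K0: "0 \<le> K" using \<open>0 \<le> P q2\<close> \<open>Q q1 < 0\<close> unfolding K_def
      by (intro divide_nonneg_pos) auto
    have KQ: "K * Q q1 = - (P q2 + 1)" using \<open>Q q1 < 0\<close> by (simp add: K_def)
    have "P q + K * Q q < 0" if q: "q \<in> S" for q
    proof (cases "0 \<le> P q")
      case True
      then have "q \<in> C" using q by (simp add: C_def)
      then have "Q q \<le> Q q1" using q1 by blast
      then have "K * Q q \<le> K * Q q1" using K0 by (simp add: mult_left_mono)
      then show ?thesis using KQ q2 q by force
    next
      case False
      have "K * Q q \<le> 0" using K0 Qle q by (simp add: mult_nonneg_nonpos)
      then show ?thesis using False by linarith
    qed
    then show ?thesis by blast
  qed
qed

lemma GL2: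
  fixes F D :: "'x::metric_space \<Rightarrow> real"
  assumes S: "compact S" and cF: "continuous_on S F" and cD: "continuous_on S D"
    and Fle: "\<forall>q\<in>S. F q \<le> lam" and Fl: "\<forall>q\<in>S. F q = lam \<longrightarrow> D q < 0"
  shows "\<exists>e>0. \<forall>q\<in>S. F q + e * D q < lam"
proof -
  define C where "C = {q\<in>S. 0 \<le> D q}"
  have cC: "compact C" unfolding C_def by (rule compact_sub_ge[OF S cD])
  show ?thesis
  proof (cases "C = {}")
    case True
    then have "\<forall>q\<in>S. F q + 1 * D q < lam" using Fle by (force simp: C_def not_le)
    then show ?thesis by (intro exI[of _ 1]) auto
  next
    case False
    have "continuous_on C F" using cF by (rule continuous_on_subset) (auto simp: C_def)
    from continuous_attains_sup[OF cC False this]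
    obtain q1 where q1: "q1 \<in> C" "\<forall>q\<in>C. F q \<le> F q1" by blast
    have "q1 \<in> S" "0 \<le> D q1" using q1 by (auto simp: C_def)
    then have "F q1 < lam" using Fle Fl by (metis less_eq_real_def not_le)
    have "S \<noteq> {}" using \<open>q1 \<in> S\<close> by blast
    from continuous_attains_sup[OF S this cD]
    obtain q2 where q2: "q2 \<in> S" "\<forall>q\<in>S. D q \<le> D q2" by blast
    have B0: "0 \<le> D q2" using q2 \<open>q1 \<in> S\<close> \<open>0 \<le> D q1\<close> by force
    define e where "e = (lam - F q1) / (D q2 + 1)"
    have e0: "0 < e" using B0 \<open>F q1 < lam\<close> by (simp add: e_def)
    have eB: "e * D q2 < lam - F q1"
    proof -
      have "e * D q2 < e * (D q2 + 1)" using e0 by simp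
      also have "\<dots> = lam - F q1" using B0 by (simp add: e_def)
      finally show ?thesis .
    qed
    have "F q + e * D q < lam" if q: "q \<in> S" for q
    proof (cases "0 \<le> D q")
      case True
      then have "q \<in> C" using q by (simp add: C_def)
      then have "F q \<le> F q1" using q1 by blast
      moreover have "e * D q \<le> e * D q2" using e0 q2 q by (simp add: mult_left_mono)
      ultimately show ?thesis using eB by linarith
    next
      case False
      then have "e * D q < 0" using e0 by (simp add: mult_pos_neg)
      then show ?thesis using Fle q by force
    qed
    then show ?thesis using e0 by blast
  qed
qed

lemma Gpos:
  fixes l :: "'i \<Rightarrow> real \<times> real \<Rightarrow> real"
  assumes I: "I \<noteq> {}" and K: "0 < K"
    and lip: "\<And>q d d'. q \<in> I \<Longrightarrow> l q d - l q d' \<le> K * norm (d - d')"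
    and bd: "\<And>q d. q \<in> I \<Longrightarrow> \<bar>l q d\<bar> \<le> K * norm d"
    and pos: "\<And>d. norm d = 1 \<Longrightarrow> \<exists>q\<in>I. 0 < l q d"
  shows "\<exists>k>0. \<forall>d. norm d = 1 \<longrightarrow> (\<exists>q\<in>I. k \<le> l q d)"
proof -
  define G where "G d = Sup ((\<lambda>q. l q d) ` I)" for d
  have bdd: "bdd_above ((\<lambda>q. l q d) ` I)" for d
    using bd by (intro bdd_aboveI2[of _ _ "K * norm d"]) (meson abs_le_D1)
  have Gup: "q \<in> I \<Longrightarrow> l q d \<le> G d" for q d
    unfolding G_def by (rule cSup_upper) (use bdd in auto)
  have Glip: "G d' \<le> G d + K * norm (d' - d)" for d d'
    unfolding G_def[of d']
  proof (rule cSup_least)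
    show "(\<lambda>q. l q d') ` I \<noteq> {}" using I by simp
    fix x assume "x \<in> (\<lambda>q. l q d') ` I"
    then obtain q where q: "q \<in> I" "x = l q d'" by blast
    then show "x \<le> G d + K * norm (d' - d)" using lip[OF q(1), of d' d] Gup[OF q(1), of d] by linarith
  qed
  have cG: "continuous_on S G" for S
    unfolding continuous_on_iff
  proof (intro ballI allI impI)
    fix x e assume "x \<in> S" "0 < (e::real)"
    show "\<exists>d>0. \<forall>x'\<in>S. dist x' x < d \<longrightarrow> dist (G x') (G x) < e"
    proof (intro exI[of _ "e / K"] conjI ballI impI)
      show "0 < e / K" using \<open>0 < e\<close> K by simp
      fix x' assume "dist x' x < e / K"
      then have "K * norm (x' - x) < e" using K by (simp add: dist_norm field_simps)
      moreover have "norm (x - x') = norm (x' - x)" by (rule norm_minus_commute)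
      ultimately show "dist (G x') (G x) < e" using Glip[of x x'] Glip[of x' x]
        by (simp add: dist_real_def abs_less_iff)
    qed
  qed
  have sne: "sphere (0::real\<times>real) 1 \<noteq> {}"
  proof -
    have "((1::real), (0::real)) \<in> sphere 0 1" by (simp add: norm_Pair)
    then show ?thesis by blast
  qed
  from continuous_attains_inf[OF compact_sphere sne cG]
  obtain d0 where d0: "d0 \<in> sphere 0 1" "\<forall>d\<in>sphere 0 1. G d0 \<le> G d" by blast
  have "norm d0 = 1" using d0 by simp
  then obtain q0 where "q0 \<in> I" "0 < l q0 d0" using pos by blast
  then have G0: "0 < G d0" using Gup by (meson less_le_trans)
  show ?thesis
  proof (intro exI[of _ "G d0 / 2"] conjI allI impI)
    show "0 < G d0 / 2" using G0 by simp
    fix d :: "real \<times> real" assume "norm d = 1"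
    then have "G d0 \<le> G d" using d0 by simp
    then have "G d - G d0 / 2 < Sup ((\<lambda>q. l q d) ` I)" using G0 by (simp add: G_def)
    then obtain x where "x \<in> (\<lambda>q. l q d) ` I" "G d - G d0 / 2 < x"
      using less_cSup_iff[OF _ bdd] I by blast
    then show "\<exists>q\<in>I. G d0 / 2 \<le> l q d" using \<open>G d0 \<le> G d\<close> by force
  qed
qed




type_synonym e2 = "real \<times> real"
type_synonym e3 = "(real \<times> real) \<times> real"

definition aff :: "e3 \<times> e3 \<Rightarrow> e2 \<Rightarrow> real" where
  "aff p w = 1 - snd (fst p) * inner (snd p) (w, 1)"
definition lin :: "e3 \<times> e3 \<Rightarrow> e2 \<Rightarrow> real" where
  "lin p d = snd (fst p) * inner (snd p) (d, 0)"

lemma aff_add: "aff p (w + d) = aff p w - lin p d"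
  by (simp add: aff_def lin_def inner_prod_def algebra_simps)
lemma lin_scale: "lin p (t *\<^sub>R d) = t * lin p d"
  by (simp add: lin_def inner_prod_def algebra_simps)
lemma lin_add: "lin p (a + b) = lin p a + lin p b"
  by (simp add: lin_def inner_prod_def algebra_simps)
lemma lin_diff: "lin p d - lin p d' = lin p (d - d')"
  by (simp add: lin_def inner_prod_def algebra_simps)

lemma norm_snd_le': "norm (snd x) \<le> norm x"
  unfolding norm_prod_def by (rule real_sqrt_sum_squares_ge2)

lemma cont_aff'[continuous_intros]: "continuous_on S f \<Longrightarrow> continuous_on S (\<lambda>x. aff (f x) w)"
  unfolding aff_def by (intro continuous_intros)
lemma cont_lin'[continuous_intros]: "continuous_on S f \<Longrightarrow> continuous_on S (\<lambda>x. lin (f x) w)"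
  unfolding lin_def by (intro continuous_intros)

locale nnorm =
  fixes nn :: "e3 \<Rightarrow> real" and m M :: real
  assumes nn_add: "nn (x + y) \<le> nn x + nn y"
    and nn_scale: "nn (t *\<^sub>R x) = \<bar>t\<bar> * nn x"
    and m_pos: "0 < m" and nn_lower: "m * norm x \<le> nn x" and nn_upper: "nn x \<le> M * norm x"
begin

lemma nn_nonneg: "0 \<le> nn x"
proof -
  have "0 \<le> m * norm x" using m_pos by simp
  then show ?thesis using nn_lower[of x] by linarith
qed

lemma M_pos: "0 < M"
proof -
  have "m * norm ((1::real,0::real),0::real) \<le> M * norm ((1::real,0::real),0::real)"
    using nn_lower[of "((1,0),0)"] nn_upper[of "((1,0),0)"] by linarith
  moreover have "norm ((1::real,0::real),0::real) = 1" by (simp add: norm_Pair)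
  ultimately show ?thesis using m_pos by simp
qed

lemma nn_zero: "nn 0 = 0"
  using nn_scale[of 0 0] by simp

lemma nn_minus: "nn (- x) = nn x"
  using nn_scale[of "-1" x] by simp

lemma nn_diff_le: "\<bar>nn x - nn y\<bar> \<le> M * norm (x - y)"
proof -
  have "nn x \<le> nn y + nn (x - y)" using nn_add[of y "x - y"] by simp
  moreover have "nn y \<le> nn x + nn (y - x)" using nn_add[of x "y - x"] by simp
  moreover have "nn (y - x) = nn (x - y)" using nn_minus[of "x - y"] by simp
  ultimately show ?thesis using nn_upper[of "x - y"] by linarith
qed

lemma continuous_on_nn: "continuous_on S nn"
  unfolding continuous_on_iff
proof (intro ballI allI impI)
  fix x e assume "x \<in> S" "0 < (e::real)"
  show "\<exists>d>0. \<forall>x'\<in>S. dist x' x < d \<longrightarrow> dist (nn x') (nn x) < e"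
  proof (intro exI[of _ "e / M"] conjI ballI impI)
    show "0 < e / M" using \<open>0 < e\<close> M_pos by simp
    fix x' assume "dist x' x < e / M"
    then have "M * norm (x' - x) < e" using M_pos by (simp add: dist_norm field_simps)
    then show "dist (nn x') (nn x) < e" using nn_diff_le[of x' x] by (simp add: dist_real_def)
  qed
qed

lemma continuous_on_nn_comp[continuous_intros]:
  "continuous_on S f \<Longrightarrow> continuous_on S (\<lambda>x. nn (f x))"
  using continuous_on_compose2[OF continuous_on_nn[of UNIV]] by blast

lemma nn_convex: "convex {c. nn c < 1}"
  unfolding convex_def
proof (intro allI impI ballI, safe)
  fix x y and u v :: real assume xy: "nn x < 1" "nn y < 1" "0 \<le> u" "0 \<le> v" "u + v = 1"
  have "nn (u *\<^sub>R x + v *\<^sub>R y) \<le> u * nn x + v * nn y"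
    using nn_add[of "u *\<^sub>R x" "v *\<^sub>R y"] nn_scale[of u x] nn_scale[of v y] xy by simp
  also have "\<dots> < 1"
  proof (cases "u = 0")
    case True then show ?thesis using xy by simp
  next
    case False
    then have "u * nn x < u * 1" using xy by simp
    moreover have "v * nn y \<le> v * 1" using xy by (intro mult_left_mono) auto
    ultimately show ?thesis using xy by linarith
  qed
  finally show "nn (u *\<^sub>R x + v *\<^sub>R y) < 1" .
qed

lemma nn_eq0: "nn x = 0 \<Longrightarrow> x = 0"
proof -
  assume "nn x = 0"
  then have "m * norm x \<le> 0" using nn_lower[of x] by simp
  then have "norm x \<le> 0" using m_pos by (simp add: mult_le_0_iff)
  then show "x = 0" by simp
qed

lemma hb:
  assumes T: "\<And>t. 1 \<le> nn (y0 + t *\<^sub>R e)"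
  shows "\<exists>u. (\<forall>y. \<bar>inner u y\<bar> \<le> nn y) \<and> inner u e = 0 \<and> 1 \<le> inner u y0"
proof -
  have cS: "convex {c. nn c < 1}" by (rule nn_convex)
  have cT: "convex (range (\<lambda>t. y0 + t *\<^sub>R e))"
  proof (rule convexI)
    fix x y and u v :: real assume "x \<in> range (\<lambda>t. y0 + t *\<^sub>R e)" "y \<in> range (\<lambda>t. y0 + t *\<^sub>R e)"
      "0 \<le> u" "0 \<le> v" "u + v = 1"
    then obtain t s where ts: "x = y0 + t *\<^sub>R e" "y = y0 + s *\<^sub>R e" "u + v = 1" by auto
    have "u *\<^sub>R x + v *\<^sub>R y = (u + v) *\<^sub>R y0 + (u * t + v * s) *\<^sub>R e"
      by (simp add: ts(1,2) algebra_simps)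
    also have "\<dots> = y0 + (u * t + v * s) *\<^sub>R e" using ts(3) by simp
    finally show "u *\<^sub>R x + v *\<^sub>R y \<in> range (\<lambda>t. y0 + t *\<^sub>R e)" by auto
  qed
  have ne1: "{c. nn c < 1} \<noteq> {}" using nn_zero by (metis empty_iff mem_Collect_eq zero_less_one)
  have ne2: "range (\<lambda>t. y0 + t *\<^sub>R e) \<noteq> {}" by auto
  have dj: "{c. nn c < 1} \<inter> range (\<lambda>t. y0 + t *\<^sub>R e) = {}"
  proof -
    { fix c assume c: "nn c < 1" "c \<in> range (\<lambda>t. y0 + t *\<^sub>R e)"
      then obtain t where "c = y0 + t *\<^sub>R e" by auto
      with T[of t] c(1) have False by simp }
    then show ?thesis by blast
  qed
  obtain a b where a: "a \<noteq> 0" and aS0: "\<forall>x\<in>{c. nn c < 1}. inner a x \<le> b"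
    and aT0: "\<forall>x\<in>range (\<lambda>t. y0 + t *\<^sub>R e). b \<le> inner a x"
    using separating_hyperplane_sets[OF cS cT ne1 ne2 dj] by blast
  have aS: "\<And>x. nn x < 1 \<Longrightarrow> inner a x \<le> b" using aS0 by blast
  have aT: "\<And>t. b \<le> inner a (y0 + t *\<^sub>R e)" using aT0 by blast
  have ae: "inner a e = 0"
  proof (rule ccontr)
    assume ne: "inner a e \<noteq> 0"
    define t where "t = (b - inner a y0 - 1) / inner a e"
    have "inner a (y0 + t *\<^sub>R e) = inner a y0 + t * inner a e" by (simp add: inner_add_right)
    also have "\<dots> = b - 1" using ne by (simp add: t_def)
    finally show False using aT[of t] by simp
  qed
  have b0: "0 \<le> b" using aS[of 0] nn_zero by simp
  have bound: "inner a y \<le> b * nn y" for y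
  proof (cases "nn y = 0")
    case True then have "y = 0" by (rule nn_eq0)
    then show ?thesis using True by simp
  next
    case False
    then have pos: "0 < nn y" using nn_nonneg[of y] by simp
    have "z * (inner a y / nn y) \<le> b" if "0 < z" "z < 1" for z
    proof -
      have "nn ((z / nn y) *\<^sub>R y) = z" using pos that nn_scale[of "z / nn y" y] by simp
      then have "inner a ((z / nn y) *\<^sub>R y) \<le> b" using that aS[of "(z / nn y) *\<^sub>R y"] by simp
      then show ?thesis by (simp add: inner_scaleR_right)
    qed
    then have "inner a y / nn y \<le> b" by (rule field_le_mult_one_interval)
    then show ?thesis using pos by (simp add: field_simps)
  qed
  have babs: "\<bar>inner a y\<bar> \<le> b * nn y" for y
    using bound[of y] bound[of "-y"] nn_minus[of y] by (simp add: inner_minus_right)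
  have bpos: "0 < b"
  proof (rule ccontr)
    assume "\<not> 0 < b"
    then have "b = 0" using b0 by simp
    then have "inner a a \<le> 0" using babs[of a] by simp
    then show False using a inner_gt_zero_iff[of a] by linarith
  qed
  define u where "u = (1 / b) *\<^sub>R a"
  have "\<bar>inner u y\<bar> \<le> nn y" for y
    using babs[of y] bpos by (simp add: u_def field_simps)
  moreover have "inner u e = 0" using ae by (simp add: u_def)
  moreover have "1 \<le> inner u y0" using aT[of 0] bpos by (simp add: u_def field_simps)
  ultimately show ?thesis by blast
qed


definition PP :: "(e3 \<times> e3) set" where
  "PP = {p. nn (fst p) = 1 \<and> (\<forall>y. \<bar>inner (snd p) y\<bar> \<le> nn y) \<and> inner (snd p) (fst p) = 1}"

lemma PP_D:
  assumes "p \<in> PP"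
  shows "nn (fst p) = 1" "\<And>y. \<bar>inner (snd p) y\<bar> \<le> nn y" "inner (snd p) (fst p) = 1"
  using assms by (auto simp: PP_def)

lemma PP_fst_norm: assumes "p \<in> PP" shows "norm (fst p) \<le> 1 / m"
  using nn_lower[of "fst p"] PP_D(1)[OF assms] m_pos by (simp add: field_simps)

lemma PP_snd_norm: assumes "p \<in> PP" shows "norm (snd p) \<le> M"
proof -
  have "norm (snd p) * norm (snd p) = \<bar>inner (snd p) (snd p)\<bar>"
    by (simp add: power2_eq_square[symmetric] power2_norm_eq_inner)
  also have "\<dots> \<le> nn (snd p)" by (rule PP_D(2)[OF assms])
  also have "\<dots> \<le> M * norm (snd p)" by (rule nn_upper)
  finally have *: "norm (snd p) * norm (snd p) \<le> M * norm (snd p)" .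
  show ?thesis
  proof (cases "norm (snd p) = 0")
    case True then show ?thesis using M_pos by simp
  next
    case False then have "0 < norm (snd p)" by simp
    then show ?thesis using * by (simp add: mult_le_cancel_right)
  qed
qed

lemma PP_c3: assumes "p \<in> PP" shows "\<bar>snd (fst p)\<bar> \<le> 1 / m"
proof -
  have "\<bar>snd (fst p)\<bar> = norm (snd (fst p))" by simp
  also have "\<dots> \<le> norm (fst p)" by (rule norm_snd_le')
  finally show ?thesis using PP_fst_norm[OF assms] by linarith
qed

definition K0 :: real where "K0 = M / m"

lemma K0_pos: "0 < K0" using M_pos m_pos by (simp add: K0_def)

lemma lin_bound: assumes "p \<in> PP" shows "\<bar>lin p d\<bar> \<le> K0 * norm d"
proof -
  have "\<bar>inner (snd p) (d, 0)\<bar> \<le> norm (snd p) * norm (d, 0::real)" by (rule Cauchy_Schwarz_ineq2)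
  also have "\<dots> \<le> M * norm d" using PP_snd_norm[OF assms] by (simp add: mult_right_mono)
  finally have a: "\<bar>inner (snd p) (d, 0)\<bar> \<le> M * norm d" .
  have "\<bar>lin p d\<bar> = \<bar>snd (fst p)\<bar> * \<bar>inner (snd p) (d, 0)\<bar>" by (simp add: lin_def abs_mult)
  also have "\<dots> \<le> (1 / m) * (M * norm d)"
    using PP_c3[OF assms] a m_pos by (intro mult_mono) auto
  finally show ?thesis by (simp add: K0_def)
qed

lemma compact_PP: "compact PP"
  unfolding compact_eq_bounded_closed
proof (rule conjI)
  show "bounded PP"
    unfolding bounded_iff
  proof (intro exI ballI)
    fix p assume p: "p \<in> PP"
    have "norm p \<le> norm (fst p) + norm (snd p)"
      using norm_Pair_le[of "fst p" "snd p"] by simp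
    then show "norm p \<le> 1 / m + M" using PP_fst_norm[OF p] PP_snd_norm[OF p] by linarith
  qed
  have "PP = {p. nn (fst p) = 1} \<inter> {p. inner (snd p) (fst p) = 1} \<inter> (\<Inter>y. {p. \<bar>inner (snd p) y\<bar> \<le> nn y})"
    by (auto simp: PP_def)
  moreover have "closed {p::e3\<times>e3. nn (fst p) = 1}"
    by (intro closed_Collect_eq continuous_intros)
  moreover have "closed {p::e3\<times>e3. inner (snd p) (fst p) = 1}"
    by (intro closed_Collect_eq continuous_intros)
  moreover have "closed (\<Inter>y. {p::e3\<times>e3. \<bar>inner (snd p) y\<bar> \<le> nn y})"
    by (intro closed_INT ballI closed_Collect_le continuous_intros)
  ultimately show "closed PP" by (simp only:) (intro closed_Int)
qed

lemma support: assumes "nn c = 1" shows "\<exists>u. (c, u) \<in> PP"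
proof -
  have "1 \<le> nn (c + t *\<^sub>R 0)" for t using assms by simp
  from hb[OF this] obtain u where u: "\<forall>y. \<bar>inner u y\<bar> \<le> nn y" "1 \<le> inner u c" by blast
  have "inner u c \<le> 1" using u(1) assms by (metis abs_le_D1)
  then have "inner u c = 1" using u(2) by simp
  then have "(c, u) \<in> PP" unfolding PP_def mem_Collect_eq fst_conv snd_conv using u(1) assms by blast
  then show ?thesis by blast
qed

lemma PP_ne: "PP \<noteq> {}"
proof -
  define k :: e3 where "k = ((0,0),1)"
  have "k \<noteq> 0" by (simp add: k_def zero_prod_def)
  then have "nn k \<noteq> 0" using nn_eq0 by blast
  then have kp: "0 < nn k" using nn_nonneg[of k] by linarith
  have "nn ((1 / nn k) *\<^sub>R k) = 1" using kp nn_scale[of "1 / nn k" k] by simp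
  then show ?thesis using support by blast
qed

definition H :: "e2 \<Rightarrow> real" where "H w = Sup ((\<lambda>p. \<bar>aff p w\<bar>) ` PP)"

lemma cont_aff[continuous_intros]: "continuous_on S (\<lambda>p. aff p w)"
  unfolding aff_def by (intro continuous_intros)

lemma H_attained: "\<exists>p\<in>PP. H w = \<bar>aff p w\<bar> \<and> (\<forall>q\<in>PP. \<bar>aff q w\<bar> \<le> \<bar>aff p w\<bar>)"
proof -
  have "continuous_on PP (\<lambda>p. \<bar>aff p w\<bar>)" by (intro continuous_intros)
  from continuous_attains_sup[OF compact_PP PP_ne this]
  obtain p where p: "p \<in> PP" "\<forall>q\<in>PP. \<bar>aff q w\<bar> \<le> \<bar>aff p w\<bar>" by blast
  have "H w = \<bar>aff p w\<bar>" unfolding H_def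
    by (rule cSup_eq_maximum) (use p in auto)
  then show ?thesis using p by blast
qed

lemma H_upper: "p \<in> PP \<Longrightarrow> \<bar>aff p w\<bar> \<le> H w"
  using H_attained[of w] by auto

lemma H_lip: "H w - K0 * norm (w - w') \<le> H w'"
proof -
  obtain p where p: "p \<in> PP" "H w = \<bar>aff p w\<bar>" using H_attained by blast
  have "aff p w' = aff p w - lin p (w' - w)" using aff_add[of p w "w' - w"] by simp
  moreover have "\<bar>lin p (w' - w)\<bar> \<le> K0 * norm (w - w')"
    using lin_bound[OF p(1), of "w' - w"] by (simp add: norm_minus_commute)
  ultimately have "H w - K0 * norm (w - w') \<le> \<bar>aff p w'\<bar>" using p(2) by linarith
  also have "\<dots> \<le> H w'" by (rule H_upper[OF p(1)])
  finally show ?thesis .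
qed

lemma continuous_H: "continuous_on S H"
  unfolding continuous_on_iff
proof (intro ballI allI impI)
  fix x e assume "x \<in> S" "0 < (e::real)"
  show "\<exists>d>0. \<forall>x'\<in>S. dist x' x < d \<longrightarrow> dist (H x') (H x) < e"
  proof (intro exI[of _ "e / K0"] conjI ballI impI)
    show "0 < e / K0" using \<open>0 < e\<close> K0_pos by simp
    fix x' assume "dist x' x < e / K0"
    then have "K0 * norm (x' - x) < e" using K0_pos by (simp add: dist_norm field_simps)
    moreover have "norm (x - x') = norm (x' - x)" by (rule norm_minus_commute)
    ultimately show "dist (H x') (H x) < e" using H_lip[of x x'] H_lip[of x' x]
      by (simp add: dist_real_def abs_less_iff)
  qed
qed


lemma H_nonneg: "0 \<le> H w"
proof -
  obtain p where "p \<in> PP" "H w = \<bar>aff p w\<bar>" using H_attained by blast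
  then show ?thesis by simp
qed

lemma pos_coerc:
  assumes d: "norm d = 1"
  shows "\<exists>p\<in>PP. 0 < \<bar>lin p d\<bar>"
proof -
  define dh :: e3 where "dh = (d, 0)"
  define k :: e3 where "k = ((0,0),1)"
  have ndh: "norm dh = 1" using d by (simp add: dh_def)
  have nk: "norm k = 1" by (simp add: k_def norm_Pair)
  have "\<exists>t. nn (k + (t - 1) *\<^sub>R dh) < nn (k + t *\<^sub>R dh)"
  proof (rule ccontr)
    assume "\<not> ?thesis"
    then have st: "nn (k + t *\<^sub>R dh) \<le> nn (k + (t - 1) *\<^sub>R dh)" for t by (simp add: not_less)
    have ind: "nn (k + real n *\<^sub>R dh) \<le> nn k" for n
    proof (induction n)
      case 0 then show ?case by simp
    next
      case (Suc n)
      have "nn (k + real (Suc n) *\<^sub>R dh) \<le> nn (k + (real (Suc n) - 1) *\<^sub>R dh)" by (rule st)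
      also have "\<dots> = nn (k + real n *\<^sub>R dh)" by simp
      finally show ?case using Suc by linarith
    qed
    define n where "n = nat (ceiling (nn k / m)) + 2"
    have "nn k / m \<le> real n - 2" unfolding n_def by linarith
    then have nkm: "nn k \<le> m * (real n - 2)" using m_pos by (simp add: field_simps)
    have "real n * norm dh \<le> norm (k + real n *\<^sub>R dh) + norm k"
      using norm_triangle_ineq4[of "k + real n *\<^sub>R dh" k] by simp
    then have "real n - 1 \<le> norm (k + real n *\<^sub>R dh)" using ndh nk by simp
    then have "m * (real n - 1) \<le> m * norm (k + real n *\<^sub>R dh)" using m_pos by simp
    also have "\<dots> \<le> nn (k + real n *\<^sub>R dh)" by (rule nn_lower)
    also have "\<dots> \<le> nn k" by (rule ind)
    finally show False using nkm m_pos by (simp add: algebra_simps)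
  qed
  then obtain t where t: "nn (k + (t - 1) *\<^sub>R dh) < nn (k + t *\<^sub>R dh)" by blast
  define y where "y = k + t *\<^sub>R dh"
  have ypos: "0 < nn y" using t nn_nonneg[of "k + (t - 1) *\<^sub>R dh"] by (simp add: y_def)
  define x where "x = (1 / nn y) *\<^sub>R y"
  have "nn x = 1" using ypos nn_scale[of "1 / nn y" y] by (simp add: x_def)
  then obtain u where u: "(x, u) \<in> PP" using support by blast
  have ux: "inner u x = 1" using PP_D(3)[OF u] by simp
  have uy: "inner u y = nn y" using ux ypos by (simp add: x_def inner_scaleR_right field_simps)
  have i1: "inner u (y - dh) \<le> nn (y - dh)" using PP_D(2)[OF u, of "y - dh"] by simp
  have e: "y - dh = k + (t - 1) *\<^sub>R dh" by (simp add: y_def algebra_simps)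
  have "nn (y - dh) < nn y" unfolding e using t by (simp add: y_def)
  then have "inner u (y - dh) < nn y" using i1 by linarith
  then have udh: "0 < inner u dh" using uy by (simp add: inner_diff_right)
  have "snd x = 1 / nn y" by (simp add: x_def y_def k_def dh_def)
  then have "lin (x, u) d = (1 / nn y) * inner u dh" by (simp add: lin_def dh_def)
  then have "0 < lin (x, u) d" using udh ypos by simp
  then show ?thesis using u by force
qed

lemma coerc: "\<exists>nu>0. \<forall>w. nu * norm w - H 0 \<le> H w"
proof -
  have "\<exists>k>0. \<forall>d. norm d = 1 \<longrightarrow> (\<exists>q\<in>PP. k \<le> \<bar>lin q d\<bar>)"
  proof (rule Gpos[OF PP_ne K0_pos])
    fix q d d' assume q: "q \<in> PP"
    have "\<bar>lin q d\<bar> - \<bar>lin q d'\<bar> \<le> \<bar>lin q d - lin q d'\<bar>" by simp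
    also have "\<dots> = \<bar>lin q (d - d')\<bar>" by (simp add: lin_diff)
    also have "\<dots> \<le> K0 * norm (d - d')" by (rule lin_bound[OF q])
    finally show "\<bar>lin q d\<bar> - \<bar>lin q d'\<bar> \<le> K0 * norm (d - d')" .
  next
    fix q d assume q: "q \<in> PP"
    show "\<bar>\<bar>lin q d\<bar>\<bar> \<le> K0 * norm d" using lin_bound[OF q] by simp
  next
    fix d :: e2 assume "norm d = 1"
    then show "\<exists>q\<in>PP. 0 < \<bar>lin q d\<bar>" by (rule pos_coerc)
  qed
  then obtain nu where nu: "0 < nu" "\<And>d. norm d = 1 \<Longrightarrow> \<exists>q\<in>PP. nu \<le> \<bar>lin q d\<bar>" by blast
  have "nu * norm w - H 0 \<le> H w" for w
  proof (cases "w = 0")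
    case True then show ?thesis using H_nonneg[of 0] by simp
  next
    case False
    then have nw: "0 < norm w" by simp
    define d where "d = (1 / norm w) *\<^sub>R w"
    have "norm d = 1" using nw by (simp add: d_def)
    then obtain q where q: "q \<in> PP" "nu \<le> \<bar>lin q d\<bar>" using nu by blast
    have "w = norm w *\<^sub>R d" using nw by (simp add: d_def)
    then have "lin q w = norm w * lin q d" by (metis lin_scale)
    then have "nu * norm w \<le> \<bar>lin q w\<bar>" using q(2) nw by (simp add: abs_mult mult.commute)
    moreover have "aff q w = aff q 0 - lin q w" using aff_add[of q 0 w] by simp
    moreover have "\<bar>aff q 0\<bar> \<le> H 0" "\<bar>aff q w\<bar> \<le> H w" using H_upper[OF q(1)] by auto
    ultimately show ?thesis by linarith
  qed
  then show ?thesis using nu(1) by blast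
qed

lemma exists_min: "\<exists>w0. \<forall>w. H w0 \<le> H w"
proof -
  obtain nu where nu: "0 < nu" "\<And>w. nu * norm w - H 0 \<le> H w" using coerc by blast
  define R where "R = 2 * H 0 / nu"
  have "0 \<le> R" using H_nonneg[of 0] nu(1) by (simp add: R_def)
  then have ne: "cball (0::e2) R \<noteq> {}" by simp
  from continuous_attains_inf[OF compact_cball ne continuous_H]
  obtain w0 where w0: "w0 \<in> cball 0 R" "\<forall>w\<in>cball 0 R. H w0 \<le> H w" by blast
  have "H w0 \<le> H w" for w
  proof (cases "w \<in> cball 0 R")
    case True then show ?thesis using w0 by blast
  next
    case False
    then have "R < norm w" by simp
    then have "nu * R < nu * norm w" using nu(1) by simp
    then have "2 * H 0 < nu * norm w" using nu(1) by (simp add: R_def)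
    then have "H 0 < H w" using nu(2)[of w] by linarith
    moreover have "H w0 \<le> H 0" using w0 \<open>0 \<le> R\<close> by simp
    ultimately show ?thesis by simp
  qed
  then show ?thesis by blast
qed


lemma quot:
  assumes d: "norm d = 1"
  shows "\<exists>ws. \<forall>p\<in>PP. lin p d = 0 \<longrightarrow> \<bar>aff p ws\<bar> \<le> 1"
proof -
  obtain d1 d2 where dd: "d = (d1, d2)" by (cases d)
  have d12: "d1\<^sup>2 + d2\<^sup>2 = 1" using d by (simp add: dd norm_Pair)
  define dh :: e3 where "dh = (d, 0)"
  define eh :: e3 where "eh = ((- d2, d1), 0)"
  define k :: e3 where "k = ((0,0),1)"
  define q0 where "q0 = Inf (range (\<lambda>t. nn (eh + t *\<^sub>R dh)))"
  have bddb: "bdd_below (range (\<lambda>t. nn (eh + t *\<^sub>R dh)))"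
    using nn_nonneg by (intro bdd_belowI2[of _ 0]) auto
  have q0le: "q0 \<le> nn (eh + t *\<^sub>R dh)" for t
    unfolding q0_def by (rule cInf_lower[OF _ bddb]) simp
  have nge: "1 \<le> norm (eh + t *\<^sub>R dh)" for t
  proof -
    have "(- d2 + t * d1)\<^sup>2 + (d1 + t * d2)\<^sup>2 = (d1\<^sup>2 + d2\<^sup>2) * (1 + t\<^sup>2)"
      by (simp add: power2_eq_square algebra_simps)
    also have "\<dots> = 1 + t\<^sup>2" using d12 by simp
    finally have eq: "(- d2 + t * d1)\<^sup>2 + (d1 + t * d2)\<^sup>2 = 1 + t\<^sup>2" .
    have "norm (eh + t *\<^sub>R dh) = sqrt ((- d2 + t * d1)\<^sup>2 + (d1 + t * d2)\<^sup>2)"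
      by (simp add: eh_def dh_def dd norm_Pair)
    also have "\<dots> = sqrt (1 + t\<^sup>2)" using eq by simp
    also have "1 \<le> sqrt (1 + t\<^sup>2)" by simp
    ultimately show ?thesis by simp
  qed
  have q0m: "m \<le> q0"
    unfolding q0_def
  proof (rule cInf_greatest)
    show "range (\<lambda>t. nn (eh + t *\<^sub>R dh)) \<noteq> {}" by simp
    fix x assume "x \<in> range (\<lambda>t. nn (eh + t *\<^sub>R dh))"
    then obtain t where t: "x = nn (eh + t *\<^sub>R dh)" by blast
    have "m * 1 \<le> m * norm (eh + t *\<^sub>R dh)" using nge[of t] m_pos by (intro mult_left_mono) auto
    then show "m \<le> x" using nn_lower[of "eh + t *\<^sub>R dh"] t by simp
  qed
  then have q0p: "0 < q0" using m_pos by simp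
  have "1 \<le> nn ((1 / q0) *\<^sub>R eh + t *\<^sub>R dh)" for t
  proof -
    have "(1 / q0) *\<^sub>R eh + t *\<^sub>R dh = (1 / q0) *\<^sub>R (eh + (q0 * t) *\<^sub>R dh)"
      using q0p by (simp add: algebra_simps)
    then have "nn ((1 / q0) *\<^sub>R eh + t *\<^sub>R dh) = (1 / q0) * nn (eh + (q0 * t) *\<^sub>R dh)"
      using q0p nn_scale by simp
    moreover have "q0 \<le> nn (eh + (q0 * t) *\<^sub>R dh)" by (rule q0le)
    ultimately have "q0 * 1 \<le> q0 * nn ((1 / q0) *\<^sub>R eh + t *\<^sub>R dh)" using q0p by simp
    then show ?thesis using q0p by (simp only: mult_le_cancel_left_pos)
  qed
  from hb[OF this] obtain psi where psi: "\<forall>y. \<bar>inner psi y\<bar> \<le> nn y" "inner psi dh = 0"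
    "1 \<le> inner psi ((1 / q0) *\<^sub>R eh)" by blast
  define be where "be = inner psi eh"
  have beq: "q0 \<le> be" using psi(3) q0p by (simp add: be_def inner_scaleR_right field_simps)
  then have bep: "0 < be" using q0p by simp
  define ws :: e2 where "ws = (- (inner psi k / be)) *\<^sub>R (- d2, d1)"
  have "\<forall>p\<in>PP. lin p d = 0 \<longrightarrow> \<bar>aff p ws\<bar> \<le> 1"
  proof (intro ballI impI)
    fix p assume p: "p \<in> PP" and l0: "lin p d = 0"
    show "\<bar>aff p ws\<bar> \<le> 1"
    proof (cases "snd (fst p) = 0")
      case True then show ?thesis by (simp add: aff_def)
    next
      case False
      then have udh: "inner (snd p) dh = 0" using l0 by (simp add: lin_def dh_def)
      have ueh: "\<bar>inner (snd p) eh\<bar> \<le> q0"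
        unfolding q0_def
      proof (rule cInf_greatest)
        show "range (\<lambda>t. nn (eh + t *\<^sub>R dh)) \<noteq> {}" by simp
        fix x assume "x \<in> range (\<lambda>t. nn (eh + t *\<^sub>R dh))"
        then obtain t where t: "x = nn (eh + t *\<^sub>R dh)" by blast
        have "inner (snd p) (eh + t *\<^sub>R dh) = inner (snd p) eh"
          using udh by (simp add: inner_add_right inner_scaleR_right)
        then show "\<bar>inner (snd p) eh\<bar> \<le> x" using PP_D(2)[OF p, of "eh + t *\<^sub>R dh"] t by simp
      qed
      have pc: "\<bar>inner psi (fst p)\<bar> \<le> 1" using psi(1) PP_D(1)[OF p] by metis
      obtain x1 x2 x3 u1 u2 u3 where pe: "p = (((x1, x2), x3), ((u1, u2), u3))"
        by (metis prod.collapse)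
      obtain p1 p2 p3 where psie: "psi = ((p1, p2), p3)" by (metis prod.collapse)
      have uc: "u1 * x1 + u2 * x2 + u3 * x3 = 1" using PP_D(3)[OF p] by (simp add: pe inner_prod_def)
      have ud: "u1 * d1 + u2 * d2 = 0" using udh by (simp add: pe dh_def dd inner_prod_def)
      have pd: "p1 * d1 + p2 * d2 = 0" using psi(2) by (simp add: psie dh_def dd inner_prod_def)
      have bee: "be = - p1 * d2 + p2 * d1" by (simp add: be_def psie eh_def inner_prod_def)
      have u1e: "u1 = - (u2 * d1 - u1 * d2) * d2"
      proof -
        have "u1 = u1 * (d1\<^sup>2 + d2\<^sup>2)" using d12 by simp
        also have "\<dots> = d1 * (u1 * d1 + u2 * d2) - (u2 * d1 - u1 * d2) * d2"
          by (simp add: power2_eq_square algebra_simps)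
        also have "\<dots> = d1 * 0 - (u2 * d1 - u1 * d2) * d2" using ud by (simp only:)
        finally show ?thesis by (simp add: algebra_simps)
      qed
      have u2e: "u2 = (u2 * d1 - u1 * d2) * d1"
      proof -
        have "u2 = u2 * (d1\<^sup>2 + d2\<^sup>2)" using d12 by simp
        also have "\<dots> = d2 * (u1 * d1 + u2 * d2) + (u2 * d1 - u1 * d2) * d1"
          by (simp add: power2_eq_square algebra_simps)
        also have "\<dots> = d2 * 0 + (u2 * d1 - u1 * d2) * d1" using ud by (simp only:)
        finally show ?thesis by (simp add: algebra_simps)
      qed
      have p1e: "p1 = - (p2 * d1 - p1 * d2) * d2"
      proof -
        have "p1 = p1 * (d1\<^sup>2 + d2\<^sup>2)" using d12 by simp
        also have "\<dots> = d1 * (p1 * d1 + p2 * d2) - (p2 * d1 - p1 * d2) * d2"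
          by (simp add: power2_eq_square algebra_simps)
        also have "\<dots> = d1 * 0 - (p2 * d1 - p1 * d2) * d2" using pd by (simp only:)
        finally show ?thesis by (simp add: algebra_simps)
      qed
      have p2e: "p2 = (p2 * d1 - p1 * d2) * d1"
      proof -
        have "p2 = p2 * (d1\<^sup>2 + d2\<^sup>2)" using d12 by simp
        also have "\<dots> = d2 * (p1 * d1 + p2 * d2) + (p2 * d1 - p1 * d2) * d1"
          by (simp add: power2_eq_square algebra_simps)
        also have "\<dots> = d2 * 0 + (p2 * d1 - p1 * d2) * d1" using pd by (simp only:)
        finally show ?thesis by (simp add: algebra_simps)
      qed
      define mu where "mu = u2 * d1 - u1 * d2"
      define nu where "nu = p2 * d1 - p1 * d2"
      have aff_eq: "aff p ws = 1 - x3 * u3 - x3 * p3 * (u1 * d2 - u2 * d1) / be"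
        by (simp add: aff_def pe ws_def inner_prod_def psie k_def algebra_simps diff_divide_distrib add_divide_distrib)
      have key: "be * (1 - x3 * u3) - x3 * p3 * (u1 * d2 - u2 * d1)
          = (p1 * x1 + p2 * x2 + p3 * x3) * (- u1 * d2 + u2 * d1)"
      proof -
        define W where "W = - d2 * x1 + d1 * x2"
        have a1: "1 - x3 * u3 = u1 * x1 + u2 * x2" using uc by (simp add: algebra_simps)
        have e2: "be = nu" using bee by (simp add: nu_def)
        have a2: "u1 * x1 + u2 * x2 = mu * W"
        proof -
          have u1m: "u1 = - mu * d2" unfolding mu_def by (rule u1e)
          have u2m: "u2 = mu * d1" unfolding mu_def by (rule u2e)
          show ?thesis by (simp add: u1m u2m W_def algebra_simps)
        qed
        have e3: "p1 * x1 + p2 * x2 = nu * W"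
        proof -
          have p1m: "p1 = - nu * d2" unfolding nu_def by (rule p1e)
          have p2m: "p2 = nu * d1" unfolding nu_def by (rule p2e)
          show ?thesis by (simp add: p1m p2m W_def algebra_simps)
        qed
        have e1: "1 - x3 * u3 = mu * W" using a1 a2 by simp
        have m1: "u1 * d2 - u2 * d1 = - mu" by (simp add: mu_def)
        have m2: "- u1 * d2 + u2 * d1 = mu" by (simp add: mu_def)
        have "be * (1 - x3 * u3) - x3 * p3 * (u1 * d2 - u2 * d1) = nu * (mu * W) - x3 * p3 * (- mu)"
          by (simp only: e1 e2 m1)
        also have "\<dots> = (nu * W + p3 * x3) * mu" by (simp add: algebra_simps)
        also have "\<dots> = (p1 * x1 + p2 * x2 + p3 * x3) * (- u1 * d2 + u2 * d1)" by (simp only: e3 m2)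
        finally show ?thesis .
      qed
      have "aff p ws = (inner psi (fst p) / be) * inner (snd p) eh"
      proof -
        have "aff p ws = (be * (1 - x3 * u3) - x3 * p3 * (u1 * d2 - u2 * d1)) / be"
          using aff_eq bep by (simp add: field_simps)
        also have "\<dots> = (p1 * x1 + p2 * x2 + p3 * x3) * (- u1 * d2 + u2 * d1) / be" using key by simp
        finally show ?thesis by (simp add: pe psie eh_def inner_prod_def algebra_simps)
      qed
      then have "\<bar>aff p ws\<bar> = (\<bar>inner psi (fst p)\<bar> / be) * \<bar>inner (snd p) eh\<bar>"
        using bep by (simp add: abs_mult)
      also have "\<dots> \<le> (1 / be) * q0"
        using pc ueh bep by (intro mult_mono) (auto simp: divide_right_mono)
      also have "\<dots> \<le> 1" using beq bep by (simp add: field_simps)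
      finally show ?thesis .
    qed
  qed
  then show ?thesis by blast
qed


lemma sharp:
  assumes w0: "\<forall>w. H w0 \<le> H w" and gt: "1 < H w0"
  shows "\<exists>k>0. \<forall>w. H w0 + k * norm (w - w0) \<le> H w"
proof -
  define Q where "Q = PP \<times> {-1::real, 1}"
  define F where "F q w = snd q * aff (fst q) w" for q :: "(e3 \<times> e3) \<times> real" and w
  define l where "l q d = - snd q * lin (fst q) d" for q :: "(e3 \<times> e3) \<times> real" and d
  define lam where "lam = H w0"
  have cQ: "compact Q" unfolding Q_def by (intro compact_Times compact_PP finite_imp_compact) simp
  have Qs: "q \<in> Q \<Longrightarrow> fst q \<in> PP \<and> (snd q = 1 \<or> snd q = -1)" for q by (auto simp: Q_def)
  have F_le: "q \<in> Q \<Longrightarrow> F q w \<le> H w" for q w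
  proof -
    assume q: "q \<in> Q"
    have "F q w \<le> \<bar>aff (fst q) w\<bar>" using Qs[OF q] by (auto simp: F_def)
    also have "\<dots> \<le> H w" using Qs[OF q] H_upper by blast
    finally show ?thesis .
  qed
  have F_add: "F q (w + d) = F q w + l q d" for q w d
    unfolding F_def l_def aff_add by (simp add: right_diff_distrib)
  have l_add: "l q (a + b) = l q a + l q b" for q a b by (simp add: l_def lin_add algebra_simps)
  have l_scale: "l q (t *\<^sub>R a) = t * l q a" for q t a by (simp add: l_def lin_scale)
  have l_bd: "q \<in> Q \<Longrightarrow> \<bar>l q d\<bar> \<le> K0 * norm d" for q d
  proof -
    assume q: "q \<in> Q"
    have "\<bar>l q d\<bar> = \<bar>lin (fst q) d\<bar>" using Qs[OF q] by (auto simp: l_def)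
    also have "\<dots> \<le> K0 * norm d" using Qs[OF q] lin_bound by blast
    finally show ?thesis .
  qed
  have cF: "continuous_on S (\<lambda>q. F q w)" for S w unfolding F_def by (intro continuous_intros)
  have cl: "continuous_on S (\<lambda>q. l q d)" for S d unfolding l_def by (intro continuous_intros)
  define Act where "Act = {q\<in>Q. F q w0 = lam}"
  have cAct: "compact Act"
  proof -
    have "closed {q\<in>Q. F q w0 = lam}"
      by (rule continuous_closed_preimage_constant[OF cF compact_imp_closed[OF cQ]])
    from compact_Int_closed[OF cQ this] show ?thesis by (simp add: Act_def Int_def)
  qed
  have ActQ: "Act \<subseteq> Q" by (auto simp: Act_def)
  have Act_ne: "Act \<noteq> {}"
  proof -
    obtain p where p: "p \<in> PP" "H w0 = \<bar>aff p w0\<bar>" using H_attained by blast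
    define s :: real where "s = (if 0 \<le> aff p w0 then 1 else -1)"
    have "(p, s) \<in> Q" by (simp add: Q_def s_def p(1))
    moreover have "F (p, s) w0 = lam" using p(2) by (simp add: F_def s_def lam_def)
    ultimately have "(p, s) \<in> Act" by (simp add: Act_def)
    then show ?thesis by blast
  qed
  have D1: "\<exists>q\<in>Act. 0 < l q d" if nd: "norm d = 1" for d
  proof (rule ccontr)
    assume "\<not> ?thesis"
    then have nonpos: "\<forall>q\<in>Act. l q d \<le> 0" by (auto simp: not_less)
    obtain ws where ws: "\<forall>p\<in>PP. lin p d = 0 \<longrightarrow> \<bar>aff p ws\<bar> \<le> 1" using quot[OF nd] by blast
    have "\<exists>K. \<forall>q\<in>Act. (F q ws - lam) + K * l q d < 0"
    proof (rule GL1[OF cAct])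
      show "continuous_on Act (\<lambda>q. F q ws - lam)" using cF by (intro continuous_intros)
      show "continuous_on Act (\<lambda>q. l q d)" by (rule cl)
      show "\<forall>q\<in>Act. l q d \<le> 0" by (rule nonpos)
      show "\<forall>q\<in>Act. l q d = 0 \<longrightarrow> F q ws - lam < 0"
      proof (intro ballI impI)
        fix q assume q: "q \<in> Act" "l q d = 0"
        then have qQ: "q \<in> Q" using ActQ by blast
        have "lin (fst q) d = 0" using q(2) Qs[OF qQ] by (auto simp: l_def)
        then have "\<bar>aff (fst q) ws\<bar> \<le> 1" using ws Qs[OF qQ] by blast
        then have "F q ws \<le> 1" using Qs[OF qQ] by (auto simp: F_def)
        then show "F q ws - lam < 0" using gt by (simp add: lam_def)
      qed
    qed
    then obtain K where K: "\<forall>q\<in>Act. (F q ws - lam) + K * l q d < 0" by blast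
    define de where "de = (ws - w0) + K *\<^sub>R d"
    have Dneg: "\<forall>q\<in>Q. F q w0 = lam \<longrightarrow> l q de < 0"
    proof (intro ballI impI)
      fix q assume q: "q \<in> Q" "F q w0 = lam"
      then have qa: "q \<in> Act" by (simp add: Act_def)
      have "F q ws = F q (w0 + (ws - w0))" by simp
      also have "\<dots> = lam + l q (ws - w0)" using q(2) F_add[of q w0 "ws - w0"] by (simp only:)
      finally have "l q de = (F q ws - lam) + K * l q d" by (simp add: de_def l_add l_scale)
      then show "l q de < 0" using K qa by simp
    qed
    have "\<exists>e>0. \<forall>q\<in>Q. F q w0 + e * l q de < lam"
      by (rule GL2[OF cQ cF cl]) (use F_le Dneg in \<open>auto simp: lam_def\<close>)
    then obtain e where e: "0 < e" "\<forall>q\<in>Q. F q w0 + e * l q de < lam" by blast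
    define w1 where "w1 = w0 + e *\<^sub>R de"
    have Fw1: "\<forall>q\<in>Q. F q w1 < lam" using e(2) by (simp add: w1_def F_add l_scale)
    obtain p where p: "p \<in> PP" "H w1 = \<bar>aff p w1\<bar>" using H_attained by blast
    have "(p, 1) \<in> Q" "(p, -1) \<in> Q" using p(1) by (auto simp: Q_def)
    then have "aff p w1 < lam" "- aff p w1 < lam" using Fw1 by (auto simp: F_def)
    then have "H w1 < lam" using p(2) by (simp add: abs_less_iff)
    then show False using w0 by (simp add: lam_def not_le[symmetric])
  qed
  have "\<exists>k>0. \<forall>d. norm d = 1 \<longrightarrow> (\<exists>q\<in>Act. k \<le> l q d)"
  proof (rule Gpos[OF Act_ne K0_pos])
    fix q d d' assume q: "q \<in> Act"
    then have qQ: "q \<in> Q" using ActQ by blast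
    have "l q d - l q d' = l q (d - d')" using l_add[of q d' "d - d'"] by simp
    also have "\<dots> \<le> K0 * norm (d - d')" using l_bd[OF qQ] abs_le_D1 by blast
    finally show "l q d - l q d' \<le> K0 * norm (d - d')" .
  next
    fix q d assume q: "q \<in> Act"
    then show "\<bar>l q d\<bar> \<le> K0 * norm d" using ActQ l_bd by blast
  next
    fix d :: e2 assume "norm d = 1" then show "\<exists>q\<in>Act. 0 < l q d" by (rule D1)
  qed
  then obtain k where k: "0 < k" "\<And>d. norm d = 1 \<Longrightarrow> \<exists>q\<in>Act. k \<le> l q d" by blast
  have "H w0 + k * norm (w - w0) \<le> H w" for w
  proof (cases "w = w0")
    case True then show ?thesis by simp
  next
    case False
    define d where "d = w - w0"
    have nd: "0 < norm d" using False by (simp add: d_def)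
    define dh where "dh = (1 / norm d) *\<^sub>R d"
    have "norm dh = 1" using nd by (simp add: dh_def)
    then obtain q where q: "q \<in> Act" "k \<le> l q dh" using k by blast
    have qQ: "q \<in> Q" using q ActQ by blast
    have "d = norm d *\<^sub>R dh" using nd by (simp add: dh_def)
    then have ld: "l q d = norm d * l q dh" by (metis l_scale)
    have "F q w = F q (w0 + d)" by (simp add: d_def)
    also have "\<dots> = lam + l q d" using q(1) F_add[of q w0 d] by (simp add: Act_def)
    finally have "F q w = lam + norm d * l q dh" using ld by simp
    moreover have "norm d * k \<le> norm d * l q dh" using q(2) nd by simp
    moreover have "F q w \<le> H w" by (rule F_le[OF qQ])
    ultimately show ?thesis by (simp add: lam_def d_def mult.commute)
  qed
  then show ?thesis using k(1) by blast
qed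

end



locale coord =
  fixes L :: "e3 \<Rightarrow> 'a::real_normed_vector" and V :: "'a set"
  assumes linL: "linear L" and injL: "inj L" and surjL: "surj L"
    and Veq: "V = {y. snd (inv L y) = 0}"
begin

definition Li :: "'a \<Rightarrow> e3" where "Li = inv L"

lemma LLi[simp]: "L (Li y) = y" unfolding Li_def by (rule surj_f_inv_f[OF surjL])
lemma LiL[simp]: "Li (L c) = c" unfolding Li_def by (rule inv_f_f[OF injL])

lemma linLi: "linear Li"
proof (rule linearI)
  fix x y show "Li (x + y) = Li x + Li y"
    using injL by (metis LLi LiL linear_add[OF linL])
next
  fix r x show "Li (r *\<^sub>R x) = r *\<^sub>R Li x"
    by (metis LLi LiL linear_scale[OF linL])
qed

definition nn :: "e3 \<Rightarrow> real" where "nn c = norm (L c)"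

lemma exists_nnorm: "\<exists>m M. nnorm nn m M"
proof -
  obtain M where M: "0 < M" "\<And>x. norm (L x) \<le> M * norm x" using linear_bounded_pos[OF linL] by blast
  have bl: "bounded_linear L" using M(2) linL
    by (intro bounded_linear_intro[of _ M]) (auto simp: linear_add linear_scale mult.commute)
  have sne: "sphere (0::e3) 1 \<noteq> {}"
  proof -
    have "(((1::real),(0::real)),(0::real)) \<in> sphere 0 1" by (simp add: norm_Pair)
    then show ?thesis by blast
  qed
  have "continuous_on (sphere 0 1) (\<lambda>c. norm (L c))"
    by (intro continuous_intros linear_continuous_on[OF bl])
  from continuous_attains_inf[OF compact_sphere sne this]
  obtain c0 where c0: "c0 \<in> sphere 0 1" "\<forall>c\<in>sphere 0 1. norm (L c0) \<le> norm (L c)" by blast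
  define m where "m = norm (L c0)"
  have "c0 \<noteq> 0" using c0 by auto
  then have "L c0 \<noteq> 0" using injL linear_0[OF linL] by (metis injD)
  then have mp: "0 < m" by (simp add: m_def)
  have low: "m * norm x \<le> nn x" for x
  proof (cases "x = 0")
    case True then show ?thesis by (simp add: nn_def linear_0[OF linL])
  next
    case False
    then have nx: "0 < norm x" by simp
    have "(1 / norm x) *\<^sub>R x \<in> sphere 0 1" using nx by simp
    then have "m \<le> norm (L ((1 / norm x) *\<^sub>R x))" using c0 by (simp add: m_def)
    also have "\<dots> = norm (L x) / norm x" using nx by (simp add: linear_scale[OF linL])
    finally show ?thesis using nx by (simp add: nn_def field_simps)
  qed
  have "nnorm nn m M"
  proof
    fix x y show "nn (x + y) \<le> nn x + nn y" by (simp add: nn_def linear_add[OF linL] norm_triangle_ineq)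
  next
    fix t x show "nn (t *\<^sub>R x) = \<bar>t\<bar> * nn x" by (simp add: nn_def linear_scale[OF linL])
  next
    show "0 < m" by (rule mp)
  next
    fix x show "m * norm x \<le> nn x" by (rule low)
  next
    fix x show "nn x \<le> M * norm x" using M(2) by (simp add: nn_def)
  qed
  then show ?thesis by blast
qed

definition g :: "'a \<Rightarrow> real" where "g y = snd (Li y)"

lemma Veq': "V = {y. g y = 0}" using Veq by (simp add: g_def Li_def)

lemma g_L[simp]: "g (L c) = snd c" by (simp add: g_def)

lemma lin_g: "linear g"
  unfolding g_def using linLi by (intro linearI) (simp_all add: linear_add linear_scale)

definition Pw :: "e2 \<Rightarrow> 'a \<Rightarrow> 'a" where "Pw w y = y - g y *\<^sub>R L (w, 1)"

lemma Pw_proj: "Pw w \<in> projections V"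
proof -
  have "linear (Pw w)" unfolding Pw_def using lin_g
    by (intro linearI) (simp_all add: linear_add linear_scale algebra_simps)
  moreover have "range (Pw w) \<subseteq> V"
  proof
    fix x assume "x \<in> range (Pw w)"
    then obtain y where y: "x = Pw w y" by blast
    have "g x = g y - g y * g (L (w, 1))" unfolding y Pw_def using lin_g
      by (simp add: linear_diff linear_scale)
    then show "x \<in> V" by (simp add: Veq')
  qed
  moreover have "\<forall>v\<in>V. Pw w v = v" by (simp add: Veq' Pw_def)
  ultimately show ?thesis by (simp add: projections_def)
qed

lemma proj_Pw:
  assumes P: "P \<in> projections V"
  shows "\<exists>w. P = Pw w"
proof -
  have linP: "linear P" and rP: "range P \<subseteq> V" and idP: "\<forall>v\<in>V. P v = v"
    using P by (auto simp: projections_def)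
  define a where "a = L ((0,0),1)"
  have ga: "g a = 1" by (simp add: a_def)
  have gPa: "g (P a) = 0" using rP by (auto simp: Veq')
  define w where "w = fst (Li (a - P a))"
  have "snd (Li (a - P a)) = 1" using ga gPa lin_g by (simp add: g_def[symmetric] linear_diff)
  then have "Li (a - P a) = (w, 1)" by (simp add: w_def prod_eq_iff)
  then have z: "L (w, 1) = a - P a" by (metis LLi)
  have "P y = Pw w y" for y
  proof -
    have "g (y - g y *\<^sub>R a) = 0" using lin_g ga by (simp add: linear_diff linear_scale)
    then have "P (y - g y *\<^sub>R a) = y - g y *\<^sub>R a" using idP by (simp add: Veq')
    then have "P y - g y *\<^sub>R P a = y - g y *\<^sub>R a" using linP by (simp add: linear_diff linear_scale)
    then have "P y = y - g y *\<^sub>R a + g y *\<^sub>R P a" by (simp add: algebra_simps)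
    then show ?thesis by (simp add: Pw_def z algebra_simps)
  qed
  then show ?thesis by blast
qed

lemma Pw_inj: "Pw w = Pw w' \<Longrightarrow> w = w'"
proof -
  assume "Pw w = Pw w'"
  then have "Pw w (L ((0,0),1)) = Pw w' (L ((0,0),1))" by simp
  then have "L (w, 1) = L (w', 1)" by (simp add: Pw_def)
  then show "w = w'" using injL by (auto dest: injD)
qed


definition PPc :: "(e3 \<times> e3) set" where
  "PPc = {p. nn (fst p) = 1 \<and> (\<forall>y. \<bar>inner (snd p) y\<bar> \<le> nn y) \<and> inner (snd p) (fst p) = 1}"

lemma lin_fun_rep:
  assumes "linear f"
  shows "f (L c) = inner ((f (L ((1,0),0)), f (L ((0,1),0))), f (L ((0,0),1))) c"
proof -
  obtain c1 c2 c3 where c: "c = ((c1, c2), c3)" by (metis prod.collapse)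
  have "c = c1 *\<^sub>R ((1,0),0) + c2 *\<^sub>R ((0,1),0) + c3 *\<^sub>R ((0,0),1)" by (simp add: c)
  then have "L c = c1 *\<^sub>R L ((1,0),0) + c2 *\<^sub>R L ((0,1),0) + c3 *\<^sub>R L ((0,0),1)"
    by (metis linear_add[OF linL] linear_scale[OF linL])
  then show ?thesis using assms by (simp add: c linear_add linear_scale inner_prod_def)
qed

lemma numrad_rep:
  "numrad T = Sup ((\<lambda>p. \<bar>inner (snd p) (Li (T (L (fst p))))\<bar>) ` PPc)"
  unfolding numrad_def
proof (rule arg_cong[where f=Sup], rule set_eqI, rule iffI)
  fix r :: real assume "r \<in> {\<bar>f (T x)\<bar> | x f. norm x = 1 \<and> bounded_linear f \<and> onorm f = 1 \<and> f x = 1}"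
  then obtain x and f :: "'a \<Rightarrow> real" where r: "r = \<bar>f (T x)\<bar>" and x: "norm x = 1" and bl: "bounded_linear f"
    and of: "onorm f = 1" and fx: "f x = 1" by blast
  define u where "u = ((f (L ((1,0),0)), f (L ((0,1),0))), f (L ((0,0),1)))"
  have fL: "f (L c) = inner u c" for c
    unfolding u_def by (rule lin_fun_rep[OF bounded_linear.linear[OF bl]])
  have f_eq: "f y = inner u (Li y)" for y using fL[of "Li y"] by simp
  have "(Li x, u) \<in> PPc"
  proof -
    have "nn (Li x) = 1" using x by (simp add: nn_def)
    moreover have "\<bar>inner u y\<bar> \<le> nn y" for y
    proof -
      have "\<bar>inner u y\<bar> = norm (f (L y))" using fL by simp
      also have "\<dots> \<le> onorm f * norm (L y)" by (rule onorm[OF bl])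
      finally show ?thesis using of by (simp add: nn_def)
    qed
    moreover have "inner u (Li x) = 1" using f_eq fx by simp
    ultimately show ?thesis unfolding PPc_def mem_Collect_eq fst_conv snd_conv by blast
  qed
  moreover have "r = \<bar>inner u (Li (T (L (Li x))))\<bar>" using r f_eq by simp
  ultimately show "r \<in> (\<lambda>p. \<bar>inner (snd p) (Li (T (L (fst p))))\<bar>) ` PPc"
    by (metis (no_types, lifting) fst_conv snd_conv image_eqI)
next
  fix r :: real assume "r \<in> (\<lambda>p. \<bar>inner (snd p) (Li (T (L (fst p))))\<bar>) ` PPc"
  then obtain p where p: "p \<in> PPc" and r: "r = \<bar>inner (snd p) (Li (T (L (fst p))))\<bar>" by blast
  have p1: "nn (fst p) = 1" and p2: "\<And>y. \<bar>inner (snd p) y\<bar> \<le> nn y" and p3: "inner (snd p) (fst p) = 1"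
    using p by (auto simp: PPc_def)
  define f where "f y = inner (snd p) (Li y)" for y
  define x where "x = L (fst p)"
  have fb: "norm (f y) \<le> norm y * 1" for y using p2[of "Li y"] by (simp add: f_def nn_def)
  have bl: "bounded_linear f"
    using fb linLi by (intro bounded_linear_intro[of _ 1]) (simp_all add: f_def linear_add linear_scale inner_add_right)
  have nx: "norm x = 1" using p1 by (simp add: x_def nn_def)
  have fx: "f x = 1" using p3 by (simp add: f_def x_def)
  have "onorm f \<le> 1" by (rule onorm_bound) (use fb in \<open>simp_all add: mult.commute\<close>)
  moreover have "1 \<le> onorm f" using onorm[OF bl, of x] nx fx by simp
  ultimately have "onorm f = 1" by simp
  moreover have "r = \<bar>f (T x)\<bar>" using r by (simp add: f_def x_def)
  ultimately show "r \<in> {\<bar>f (T x)\<bar> | x f. norm x = 1 \<and> bounded_linear f \<and> onorm f = 1 \<and> f x = 1}"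
    using nx bl fx by blast
qed

lemma Li_Pw: "Li (Pw w (L c)) = c - snd c *\<^sub>R (w, 1)"
  using linLi by (simp add: Pw_def linear_diff linear_scale)


lemma aff_rep: "inner u c = 1 \<Longrightarrow> inner u (c - snd c *\<^sub>R (w, 1)) = aff (c, u) w"
  by (simp add: aff_def inner_diff_right inner_scaleR_right del: scaleR_Pair)

lemma lin_rep: "inner u ((c - snd c *\<^sub>R (w, 1)) - (c - snd c *\<^sub>R (w0, 1))) = lin (c, u) (w0 - w)"
proof -
  have "(c - snd c *\<^sub>R (w, 1)) - (c - snd c *\<^sub>R (w0, 1)) = snd c *\<^sub>R (w0 - w, 0::real)"
    by (simp add: algebra_simps prod_eq_iff)
  then show ?thesis by (simp add: lin_def inner_scaleR_right del: scaleR_Pair)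
qed

lemma coord_main:
  assumes gt: "lambda_w V > 1"
  shows "\<exists>P0 \<in> projections V. numrad P0 = lambda_w V \<and>
           (\<forall>P \<in> projections V. numrad P = lambda_w V \<longrightarrow> P = P0) \<and>
           (\<exists>r>0. \<forall>P \<in> projections V. numrad P \<ge> numrad P0 + r * numrad (\<lambda>x. P x - P0 x))"
proof -
  obtain m M where "nnorm nn m M" using exists_nnorm by blast
  then interpret N: nnorm nn m M .
  have PPeq: "N.PP = PPc" by (simp add: N.PP_def PPc_def)
  have numPw: "numrad (Pw w) = N.H w" for w
  proof -
    have "numrad (Pw w) = Sup ((\<lambda>p. \<bar>inner (snd p) (Li (Pw w (L (fst p))))\<bar>) ` PPc)"
      by (rule numrad_rep)
    also have "(\<lambda>p. \<bar>inner (snd p) (Li (Pw w (L (fst p))))\<bar>) ` PPc = (\<lambda>p. \<bar>aff p w\<bar>) ` N.PP"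
      unfolding PPeq
    proof (rule image_cong[OF refl])
      fix p assume "p \<in> PPc"
      then have "inner (snd p) (fst p) = 1" by (simp add: PPc_def)
      then show "\<bar>inner (snd p) (Li (Pw w (L (fst p))))\<bar> = \<bar>aff p w\<bar>"
        using aff_rep[of "snd p" "fst p" w] by (simp add: Li_Pw)
    qed
    finally show ?thesis by (simp add: N.H_def)
  qed
  have numDiff: "numrad (\<lambda>x. Pw w x - Pw w0 x) \<le> N.K0 * norm (w - w0)" for w w0
  proof -
    have "numrad (\<lambda>x. Pw w x - Pw w0 x)
        = Sup ((\<lambda>p. \<bar>inner (snd p) (Li (Pw w (L (fst p)) - Pw w0 (L (fst p))))\<bar>) ` PPc)"
      by (rule numrad_rep)
    also have "\<dots> \<le> N.K0 * norm (w - w0)"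
    proof (rule cSup_least)
      show "(\<lambda>p. \<bar>inner (snd p) (Li (Pw w (L (fst p)) - Pw w0 (L (fst p))))\<bar>) ` PPc \<noteq> {}"
        using N.PP_ne PPeq by simp
      fix x assume "x \<in> (\<lambda>p. \<bar>inner (snd p) (Li (Pw w (L (fst p)) - Pw w0 (L (fst p))))\<bar>) ` PPc"
      then obtain p where p: "p \<in> PPc" "x = \<bar>inner (snd p) (Li (Pw w (L (fst p)) - Pw w0 (L (fst p))))\<bar>"
        by blast
      have "x = \<bar>lin p (w0 - w)\<bar>"
        using p(2) lin_rep[of "snd p" "fst p" w w0] linLi by (simp add: linear_diff Li_Pw)
      also have "\<dots> \<le> N.K0 * norm (w0 - w)" using N.lin_bound p(1) PPeq by blast
      finally show "x \<le> N.K0 * norm (w - w0)" by (simp add: norm_minus_commute)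
    qed
    finally show ?thesis .
  qed
  have img: "numrad ` projections V = range N.H"
  proof
    show "numrad ` projections V \<subseteq> range N.H"
    proof
      fix r assume "r \<in> numrad ` projections V"
      then obtain P where P: "P \<in> projections V" "r = numrad P" by blast
      obtain w where "P = Pw w" using proj_Pw[OF P(1)] by blast
      then show "r \<in> range N.H" using P(2) numPw by simp
    qed
    show "range N.H \<subseteq> numrad ` projections V"
    proof
      fix r assume "r \<in> range N.H"
      then obtain w where "r = N.H w" by blast
      then have "r = numrad (Pw w)" using numPw by simp
      then show "r \<in> numrad ` projections V" using Pw_proj by blast
    qed
  qed
  obtain w0 where min: "\<forall>w. N.H w0 \<le> N.H w" using N.exists_min by blast
  have lam: "lambda_w V = N.H w0"
    unfolding lambda_w_def img by (rule cInf_eq_minimum) (use min in auto)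
  then have gt1: "1 < N.H w0" using gt by simp
  obtain k where k: "0 < k" "\<forall>w. N.H w0 + k * norm (w - w0) \<le> N.H w"
    using N.sharp[OF min gt1] by blast
  define P0 where "P0 = Pw w0"
  have "P0 \<in> projections V" by (simp add: P0_def Pw_proj)
  moreover have "numrad P0 = lambda_w V" using lam numPw by (simp add: P0_def)
  moreover have "\<forall>P \<in> projections V. numrad P = lambda_w V \<longrightarrow> P = P0"
  proof (intro ballI impI)
    fix P assume P: "P \<in> projections V" "numrad P = lambda_w V"
    obtain w where w: "P = Pw w" using proj_Pw[OF P(1)] by blast
    have "N.H w = N.H w0" using P(2) lam numPw w by simp
    then have "k * norm (w - w0) \<le> 0" using k(2)[rule_format, of w] by simp
    then have "norm (w - w0) \<le> 0" using k(1) by (simp add: mult_le_0_iff)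
    then have "w = w0" by simp
    then show "P = P0" using w by (simp add: P0_def)
  qed
  moreover have "\<exists>r>0. \<forall>P \<in> projections V. numrad P \<ge> numrad P0 + r * numrad (\<lambda>x. P x - P0 x)"
  proof (intro exI[of _ "k / N.K0"] conjI ballI)
    show "0 < k / N.K0" using k(1) N.K0_pos by simp
    fix P assume P: "P \<in> projections V"
    obtain w where w: "P = Pw w" using proj_Pw[OF P] by blast
    have d: "numrad (\<lambda>x. P x - P0 x) \<le> N.K0 * norm (w - w0)"
      using numDiff[of w w0] by (simp add: w P0_def)
    have "(k / N.K0) * numrad (\<lambda>x. P x - P0 x) \<le> (k / N.K0) * (N.K0 * norm (w - w0))"
      using d k(1) N.K0_pos by (intro mult_left_mono) auto
    also have "\<dots> = k * norm (w - w0)" using N.K0_pos by simp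
    finally have "(k / N.K0) * numrad (\<lambda>x. P x - P0 x) \<le> k * norm (w - w0)" .
    moreover have "numrad P = N.H w" "numrad P0 = N.H w0" using numPw by (simp_all add: w P0_def)
    ultimately show "numrad P0 + k / N.K0 * numrad (\<lambda>x. P x - P0 x) \<le> numrad P"
      using k(2)[rule_format, of w] by linarith
  qed
  ultimately show ?thesis by blast
qed

end



lemma span2_rep:
  assumes "y \<in> span {v1, v2}"
  shows "\<exists>k1 k2. y = k1 *\<^sub>R v1 + k2 *\<^sub>R v2"
proof -
  from assms obtain k1 where "y - k1 *\<^sub>R v1 \<in> span {v2}" by (auto simp: real_vector.span_insert)
  then obtain k2 where "y - k1 *\<^sub>R v1 = k2 *\<^sub>R v2" by (auto simp: real_vector.span_singleton)
  then have "y = k1 *\<^sub>R v1 + k2 *\<^sub>R v2" by (simp add: algebra_simps)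
  then show ?thesis by blast
qed

theorem theorem3p4:
  fixes V :: "'a::banach set"
  assumes "dim (UNIV :: 'a set) = 3"
    and "subspace V" and "dim V = 2"
    and "lambda_w V > 1"
  shows "\<exists>P0 \<in> projections V. numrad P0 = lambda_w V \<and>
           (\<forall>P \<in> projections V. numrad P = lambda_w V \<longrightarrow> P = P0) \<and>
           (\<exists>r>0. \<forall>P \<in> projections V. numrad P \<ge> numrad P0 + r * numrad (\<lambda>x. P x - P0 x))"
proof -
  note dimU = assms(1) and sV = assms(2) and dV = assms(3) and gt = assms(4)
  obtain B where B: "B \<subseteq> V" "independent B" "V \<subseteq> span B" "card B = dim V"
    by (rule real_vector.basis_exists)
  have spB: "span B = V" using real_vector.span_minimal[OF B(1) sV] B(3) by (rule subset_antisym)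
  have cB: "card B = 2" using B(4) dV by simp
  then obtain v1 v2 where v: "B = {v1, v2}" "v1 \<noteq> v2" by (auto simp: card_2_iff)
  have finB: "finite B" using cB by (metis card.infinite zero_neq_numeral)
  obtain B0 :: "'a set" where B0': "B0 \<subseteq> UNIV" "independent B0" "UNIV \<subseteq> span B0"
    "card B0 = dim (UNIV :: 'a set)"
    by (rule real_vector.basis_exists)
  have B0: "independent B0" "UNIV \<subseteq> span B0" "card B0 = 3" using B0' dimU by simp_all
  have finB0: "finite B0" using B0(3) by (metis card.infinite zero_neq_numeral)
  have "\<exists>a. a \<notin> V"
  proof (rule ccontr)
    assume "\<not> ?thesis"
    then have "B0 \<subseteq> span B" using spB by blast
    from real_vector.independent_span_bound[OF finB B0(1) this] have "card B0 \<le> card B" by blast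
    then show False using B0(3) cB by simp
  qed
  then obtain a where a: "a \<notin> V" by blast
  have aB: "a \<notin> span B" using a spB by simp
  have indA: "independent (insert a B)" by (rule real_vector.independent_insertI[OF aB B(2)])
  have spanA: "span (insert a B) = UNIV"
  proof (rule ccontr)
    assume "span (insert a B) \<noteq> UNIV"
    then obtain y where y: "y \<notin> span (insert a B)" by blast
    have ind4: "independent (insert y (insert a B))" by (rule real_vector.independent_insertI[OF y indA])
    have "y \<notin> insert a B" using y real_vector.span_superset by blast
    moreover have "a \<notin> B" using a B(1) by blast
    ultimately have "card (insert y (insert a B)) = 4" using finB cB by simp
    moreover have "finite (insert y (insert a B)) \<and> card (insert y (insert a B)) \<le> card B0"
    proof -
      have "insert y (insert a B) \<subseteq> span B0" using B0(2) by (rule subset_trans[OF subset_UNIV])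
      from real_vector.independent_span_bound[OF finB0 ind4 this] show ?thesis .
    qed
    ultimately show False using B0(3) by simp
  qed
  define L :: "e3 \<Rightarrow> 'a" where "L c = fst (fst c) *\<^sub>R v1 + snd (fst c) *\<^sub>R v2 + snd c *\<^sub>R a" for c
  have linL: "linear L"
    by (intro linearI) (simp_all add: L_def algebra_simps)
  have surjL: "surj L"
  proof -
    have "y \<in> range L" for y
    proof -
      have "y \<in> span (insert a {v1, v2})" using spanA v by simp
      then obtain k3 where "y - k3 *\<^sub>R a \<in> span {v1, v2}" by (auto simp: real_vector.span_insert)
      then obtain k1 k2 where "y - k3 *\<^sub>R a = k1 *\<^sub>R v1 + k2 *\<^sub>R v2" using span2_rep by blast
      then have "y = L ((k1, k2), k3)" by (simp add: L_def algebra_simps)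
      then show ?thesis by blast
    qed
    then show ?thesis by blast
  qed
  have ker: "L c = 0 \<Longrightarrow> c = 0" for c
  proof -
    assume L0: "L c = 0"
    obtain c1 c2 c3 where c: "c = ((c1, c2), c3)" by (metis prod.collapse)
    have eq: "c1 *\<^sub>R v1 + c2 *\<^sub>R v2 + c3 *\<^sub>R a = 0" using L0 by (simp add: L_def c)
    have c30: "c3 = 0"
    proof (rule ccontr)
      assume "c3 \<noteq> 0"
      have e2: "(c1 *\<^sub>R v1 + c2 *\<^sub>R v2) + c3 *\<^sub>R a = 0" using eq by simp
      have e3: "c3 *\<^sub>R a = - (c1 *\<^sub>R v1 + c2 *\<^sub>R v2)" using e2 by (rule add_eq_0_iff[THEN iffD1])
      have "a = (1 / c3) *\<^sub>R (c3 *\<^sub>R a)" using \<open>c3 \<noteq> 0\<close> by simp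
      also have "\<dots> = (1 / c3) *\<^sub>R (- (c1 *\<^sub>R v1 + c2 *\<^sub>R v2))" using e3 by simp
      also have "\<dots> = (- c1 / c3) *\<^sub>R v1 + (- c2 / c3) *\<^sub>R v2"
        by (simp add: scaleR_add_right scaleR_diff_right)
      finally have "a = (- c1 / c3) *\<^sub>R v1 + (- c2 / c3) *\<^sub>R v2" .
      moreover have "(- c1 / c3) *\<^sub>R v1 + (- c2 / c3) *\<^sub>R v2 \<in> span B"
        using v by (intro real_vector.span_add real_vector.span_scale real_vector.span_base) auto
      ultimately show False using aB by simp
    qed
    have eq2: "c1 *\<^sub>R v1 + c2 *\<^sub>R v2 = 0" using eq c30 by simp
    have c20: "c2 = 0"
    proof (rule ccontr)
      assume "c2 \<noteq> 0"
      have e3: "c2 *\<^sub>R v2 = - (c1 *\<^sub>R v1)" using eq2 by (rule add_eq_0_iff[THEN iffD1])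
      have "v2 = (1 / c2) *\<^sub>R (c2 *\<^sub>R v2)" using \<open>c2 \<noteq> 0\<close> by simp
      also have "\<dots> = (- c1 / c2) *\<^sub>R v1" using e3 by simp
      finally have v2e: "v2 = (- c1 / c2) *\<^sub>R v1" .
      have Bd: "B - {v2} = {v1}" using v by auto
      have sp: "(- c1 / c2) *\<^sub>R v1 \<in> span {v1}"
        by (intro real_vector.span_scale real_vector.span_base) simp
      have "v2 \<in> span (B - {v2})" unfolding Bd by (subst v2e) (rule sp)
      then have "dependent B" using v real_vector.dependent_def by blast
      then show False using B(2) by simp
    qed
    have "v1 \<noteq> 0" using B(2) v real_vector.dependent_zero by blast
    then have "c1 = 0" using eq2 c20 by simp
    then show "c = 0" using c c20 c30 by (simp add: zero_prod_def)
  qed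
  have injL: "inj L"
  proof (rule injI)
    fix x y assume "L x = L y"
    then have "L (x - y) = 0" using linear_diff[OF linL] by simp
    then have "x - y = 0" by (rule ker)
    then show "x = y" by simp
  qed
  have Veq: "V = {y. snd (inv L y) = 0}"
  proof (rule set_eqI, rule iffI)
    fix y assume "y \<in> V"
    then have "y \<in> span {v1, v2}" using spB v by simp
    then obtain k1 k2 where "y = k1 *\<^sub>R v1 + k2 *\<^sub>R v2" using span2_rep by blast
    then have "y = L ((k1, k2), 0)" by (simp add: L_def)
    then have "inv L y = ((k1, k2), 0)" using inv_f_f[OF injL] by simp
    then show "y \<in> {y. snd (inv L y) = 0}" by simp
  next
    fix y assume "y \<in> {y. snd (inv L y) = 0}"
    then have s: "snd (inv L y) = 0" by simp
    have "y = L (inv L y)" using surj_f_inv_f[OF surjL] by simp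
    also have "\<dots> = fst (fst (inv L y)) *\<^sub>R v1 + snd (fst (inv L y)) *\<^sub>R v2" using s by (simp add: L_def)
    also have "\<dots> \<in> span B"
      using v by (intro real_vector.span_add real_vector.span_scale real_vector.span_base) auto
    finally show "y \<in> V" using spB by simp
  qed
  interpret C: coord L V by (rule coord.intro[OF linL injL surjL Veq])
  show ?thesis by (rule C.coord_main[OF gt])
qed


end
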